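(* Let $n\ge 2$, $x\in\mathbb{R}^{n+1}$ with $|x|<1$, and $p \geq 1$. Then, as symmetric 2-tensors on $S^n$, $$\frac{\nabla_{S^n}^2 |\cdot - x|^p}{|\cdot - x|^p} \geq -\frac{p}{4}\, g .$$
   Context: $S^n\subset\mathbb{R}^{n+1}$ is the unit sphere with its canonical Riemannian metric $g$; $\nabla_{S^n}^2$ is the Riemannian Hessian on $(S^n,g)$; $|\cdot|$ is the Euclidean norm, and $|\cdot-x|^p$ denotes the function $y\mapsto |y-x|^p$ on $S^n$. *)

theory Defs
  imports "HOL-Analysis.Analysis"
begin

text \<open>Unit-speed-scaled great-circle geodesic of the unit sphere through y with
  initial velocity v (v tangent at y, i.e. v \<bullet> y = 0): the geodesic of (S^n,g)
  with gamma(0) = y, gamma'(0) = v. For v = 0 it is constant.\<close>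
definition sphere_geodesic :: "'a::real_inner \<Rightarrow> 'a \<Rightarrow> real \<Rightarrow> 'a" where
  "sphere_geodesic y v t = cos (t * norm v) *\<^sub>R y + (sin (t * norm v) / norm v) *\<^sub>R v"

text \<open>Riemannian Hessian of f restricted to the unit sphere, as a quadratic form:
  Hess f (v,v) at y equals the second derivative of f along the geodesic with
  initial point y and initial velocity v.\<close>
definition sphere_hessian :: "('a::real_inner \<Rightarrow> real) \<Rightarrow> 'a \<Rightarrow> 'a \<Rightarrow> real" where
  "sphere_hessian f y v = deriv (deriv (\<lambda>t. f (sphere_geodesic y v t))) 0"

end

theory Submission
  imports Defs
begin

lemma bessel_aux:
  fixes x y v :: "real ^ 'n"
  assumes "norm y = 1" "v \<bullet> y = 0" "v \<noteq> 0"
  shows "(v \<bullet> x)\<^sup>2 + (y \<bullet> x)\<^sup>2 * (norm v)\<^sup>2 \<le> (norm x)\<^sup>2 * (norm v)\<^sup>2"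
proof -
  define s where "s = norm v"
  have s: "s > 0" using assms s_def by auto
  have yy: "y \<bullet> y = 1" using assms(1) by (simp add: norm_eq_1)
  have vv: "v \<bullet> v = s\<^sup>2" by (simp add: s_def power2_norm_eq_inner)
  have yv: "y \<bullet> v = 0" using assms(2) by (simp add: inner_commute)
  define w where "w = x - (y \<bullet> x) *\<^sub>R y - ((v \<bullet> x) / s\<^sup>2) *\<^sub>R v"
  have "0 \<le> w \<bullet> w" by simp
  also have "w \<bullet> w = x \<bullet> x - (y \<bullet> x)\<^sup>2 - (v \<bullet> x)\<^sup>2 / s\<^sup>2"
    unfolding w_def using s
    by (simp only: inner_diff_left inner_diff_right inner_scaleR_left inner_scaleR_right
        yy vv yv inner_commute[of v y] inner_commute[of x y] inner_commute[of x v])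
      (simp add: power2_eq_square field_simps)
  finally have "(v \<bullet> x)\<^sup>2 / s\<^sup>2 + (y \<bullet> x)\<^sup>2 \<le> (norm x)\<^sup>2"
    by (simp add: power2_norm_eq_inner)
  then have "((v \<bullet> x)\<^sup>2 / s\<^sup>2 + (y \<bullet> x)\<^sup>2) * s\<^sup>2 \<le> (norm x)\<^sup>2 * s\<^sup>2"
    by (simp add: mult_right_mono)
  moreover have "((v \<bullet> x)\<^sup>2 / s\<^sup>2 + (y \<bullet> x)\<^sup>2) * s\<^sup>2 = (v \<bullet> x)\<^sup>2 + (y \<bullet> x)\<^sup>2 * s\<^sup>2"
    using s by (simp add: field_simps)
  ultimately show ?thesis by (simp add: s_def)
qed

theorem mainTheorem3:
  fixes x :: "real ^ 'n" and p :: real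
  assumes "CARD('n) \<ge> 3" and "norm x < 1" and "p \<ge> 1"
  shows "\<forall>y \<in> sphere 0 1. \<forall>v. v \<bullet> y = 0 \<longrightarrow>
           sphere_hessian (\<lambda>z. norm (z - x) powr p) y v / norm (y - x) powr p
             \<ge> - (p / 4) * (norm v)\<^sup>2"
proof (intro ballI allI impI)
  fix y v :: "real ^ 'n"
  assume yS: "y \<in> sphere 0 1" and vy: "v \<bullet> y = 0"
  have ny: "norm y = 1" using yS by simp
  show "sphere_hessian (\<lambda>z. norm (z - x) powr p) y v / norm (y - x) powr p
             \<ge> - (p / 4) * (norm v)\<^sup>2"
  proof (cases "v = 0")
    case True
    have "sphere_geodesic y v = (\<lambda>t. y)" using True by (auto simp: sphere_geodesic_def)
    then show ?thesis using True by (simp add: sphere_hessian_def)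
  next
    case False
    define s where "s = norm v"
    define a where "a = y \<bullet> x"
    define c where "c = v \<bullet> x"
    define r where "r = norm x"
    have s: "s > 0" using False s_def by auto
    have yy: "y \<bullet> y = 1" using ny by (simp add: norm_eq_1)
    have vv: "v \<bullet> v = s\<^sup>2" by (simp add: s_def power2_norm_eq_inner)
    have yv: "y \<bullet> v = 0" using vy by (simp add: inner_commute)
    define H where "H t = 1 + r\<^sup>2 - 2 * (a * cos(s * t) + c * (sin(s * t)/s))" for t
    define G where "G = sphere_geodesic y v"
    have GG: "G t \<bullet> G t = 1" for t
    proof -
      have "G t \<bullet> G t = (cos (s * t))\<^sup>2 + (sin (s * t))\<^sup>2"
        unfolding G_def sphere_geodesic_def s_def[symmetric] using s
        by (simp add: inner_add_left inner_add_right yy vv yv inner_commute[of v y]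
            power2_eq_square field_simps mult.commute)
      then show ?thesis by simp
    qed
    have Gx: "G t \<bullet> x = a * cos(s * t) + c * (sin(s * t)/s)" for t
      unfolding G_def sphere_geodesic_def s_def[symmetric] a_def c_def
      by (simp add: inner_add_left mult.commute)
    have nsq: "(norm (G t - x))\<^sup>2 = H t" for t
      unfolding power2_norm_eq_inner H_def r_def
      by (simp add: inner_diff_left inner_diff_right GG Gx inner_commute[of x "G t"]
          power2_norm_eq_inner)
    have Hpos: "H t > 0" for t
    proof -
      have "norm (G t) = 1" using GG by (simp add: norm_eq_1)
      then have "G t \<noteq> x" using assms(2) by auto
      then have "0 < (norm (G t - x))\<^sup>2" by simp
      then show ?thesis using nsq[of t] by simp
    qed
    have feq: "(\<lambda>t. norm (sphere_geodesic y v t - x) powr p) = (\<lambda>t. H t powr (p/2))"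
    proof
      fix t
      have "H t powr (p/2) = (norm (G t - x) powr 2) powr (p/2)"
        using nsq[of t] by (simp add: powr_numeral)
      also have "\<dots> = norm (G t - x) powr p" by (subst powr_powr) simp
      finally show "norm (sphere_geodesic y v t - x) powr p = H t powr (p/2)"
        by (simp add: G_def)
    qed
    define H1 where "H1 t = 2 * a * s * sin (s * t) - 2 * c * cos (s * t)" for t
    define H2 where "H2 t = 2 * a * s\<^sup>2 * cos (s * t) + 2 * c * s * sin (s * t)" for t
    have dH: "(H has_real_derivative H1 t) (at t)" for t
      unfolding H_def[abs_def] H1_def
      using s by (auto intro!: derivative_eq_intros simp: field_simps)
    have dH1: "(H1 has_real_derivative H2 t) (at t)" for t
      unfolding H1_def[abs_def] H2_def
      using s by (auto intro!: derivative_eq_intros simp: field_simps power2_eq_square)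
    define D1 where "D1 t = p/2 * H t powr (p/2 - 1) * H1 t" for t
    have dF: "((\<lambda>t. H t powr (p/2)) has_real_derivative D1 t) (at t)" for t
      using DERIV_fun_powr[OF dH[of t] Hpos[of t], of "p/2"] by (simp add: D1_def)
    have derF: "deriv (\<lambda>t. H t powr (p/2)) = D1"
      using dF DERIV_imp_deriv by blast
    have dD1: "(D1 has_real_derivative
        p/2 * ((p/2 - 1) * H 0 powr (p/2 - 1 - 1) * H1 0 * H1 0 + H 0 powr (p/2 - 1) * H2 0)) (at 0)"
    proof -
      have "((\<lambda>t. H t powr (p/2 - 1)) has_real_derivative
          (p/2 - 1) * H 0 powr (p/2 - 1 - 1) * H1 0) (at 0)"
        using DERIV_fun_powr[OF dH[of 0] Hpos[of 0], of "p/2 - 1"] by simp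
      from DERIV_mult[OF this dH1[of 0]]
      have "((\<lambda>t. H t powr (p/2 - 1) * H1 t) has_real_derivative
          (p/2 - 1) * H 0 powr (p/2 - 1 - 1) * H1 0 * H1 0 + H 0 powr (p/2 - 1) * H2 0) (at 0)"
        by (simp add: mult.commute)
      from DERIV_cmult[OF this, of "p/2"] show ?thesis
        unfolding D1_def[abs_def] by (simp add: mult.assoc)
    qed
    have hess: "sphere_hessian (\<lambda>z. norm (z - x) powr p) y v =
        p/2 * ((p/2 - 1) * H 0 powr (p/2 - 1 - 1) * H1 0 * H1 0 + H 0 powr (p/2 - 1) * H2 0)"
      unfolding sphere_hessian_def feq derF using dD1 DERIV_imp_deriv by blast
    define h where "h = H 0"
    have h: "h > 0" using Hpos h_def by simp
    define P where "P = h powr (p/2)"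
    have P: "P > 0" using h P_def by simp
    have P1: "H 0 powr (p/2 - 1) = P / h" using h
      by (simp add: P_def h_def powr_diff)
    have P2: "H 0 powr (p/2 - 1 - 1) = P / h\<^sup>2" using h
      by (simp add: P_def h_def powr_diff power2_eq_square)
    have den: "norm (y - x) powr p = P"
    proof -
      have "norm (y - x) powr p = norm (sphere_geodesic y v 0 - x) powr p"
        by (simp add: sphere_geodesic_def)
      also have "\<dots> = P" using fun_cong[OF feq, of 0] by (simp add: P_def h_def)
      finally show ?thesis .
    qed
    have H10: "H1 0 = -2 * c" by (simp add: H1_def)
    have H20: "H2 0 = 2 * a * s\<^sup>2" by (simp add: H2_def)
    have h_eq: "h = 1 + r\<^sup>2 - 2 * a" by (simp add: h_def H_def)
    have val: "sphere_hessian (\<lambda>z. norm (z - x) powr p) y v / norm (y - x) powr p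
        = p * (p-2) * c\<^sup>2/h\<^sup>2 + p * a * s\<^sup>2/h"
      unfolding hess den P1 P2 H10 H20 using h P
      by (simp add: field_simps power2_eq_square)
    have bes: "c\<^sup>2 + a\<^sup>2 * s\<^sup>2 \<le> r\<^sup>2 * s\<^sup>2"
      using bessel_aux[OF ny vy False, of x] by (simp add: a_def c_def r_def s_def)
    have amgm: "4 * r\<^sup>2 \<le> (1 + r\<^sup>2)\<^sup>2"
      using sum_squares_ge_zero[of "1 - r\<^sup>2" 0]
      by (simp add: power2_eq_square algebra_simps)
    have key: "- c\<^sup>2 + a * s\<^sup>2 * h + s\<^sup>2 * h\<^sup>2 / 4 \<ge> 0"
    proof -
      have "a * h + h\<^sup>2/4 = ((1 + r\<^sup>2)\<^sup>2 - 4 * a\<^sup>2)/4"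
        unfolding h_eq by (simp add: power2_eq_square field_simps)
      then have "s\<^sup>2 * (a * h + h\<^sup>2/4) = s\<^sup>2 * ((1 + r\<^sup>2)\<^sup>2 - 4 * a\<^sup>2)/4" by simp
      moreover have "s\<^sup>2 * ((1 + r\<^sup>2)\<^sup>2 - 4 * a\<^sup>2)/4 \<ge> s\<^sup>2 * (r\<^sup>2 - a\<^sup>2)"
        using mult_left_mono[OF amgm, of "s\<^sup>2"] by (simp add: algebra_simps)
      ultimately show ?thesis using bes by (simp add: algebra_simps)
    qed
    have pc: "(p-2) * c\<^sup>2 \<ge> - c\<^sup>2"
      using mult_right_mono[of "-1" "p-2" "c\<^sup>2"] assms(3) by simp
    have "p * (p-2) * c\<^sup>2 + p * a * s\<^sup>2 * h + p/4 * s\<^sup>2 * h\<^sup>2 \<ge> 0"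
    proof -
      have "(p-2) * c\<^sup>2 + a * s\<^sup>2 * h + s\<^sup>2 * h\<^sup>2/4 \<ge> 0" using key pc by linarith
      then have "p * ((p-2) * c\<^sup>2 + a * s\<^sup>2 * h + s\<^sup>2 * h\<^sup>2/4) \<ge> 0" using assms(3) by simp
      then show ?thesis by (simp add: algebra_simps)
    qed
    then have "p * (p-2) * c\<^sup>2/h\<^sup>2 + p * a * s\<^sup>2/h \<ge> - (p/4) * s\<^sup>2"
      using h by (simp add: field_simps power2_eq_square)
    then show ?thesis using val by (simp add: s_def)
  qed
qed

end
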